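(* Let $t\ge1$ and $n=2(t+1)^2$. Let $\mathcal{C}_0\subseteq\mathbb{Z}_n^2$ be a linear $t$-error-correcting diameter perfect code with generator matrix $G_0$ and $\mathcal{C}=\mathbf{x}+\mathcal{C}_0$ for some $\mathbf{x}=(x_1,x_2)\in\mathbb{Z}_n^2$, of Case I or Case II. Let $\mathcal{S}$ be the set of diameter perfect Sudoku grids with respect to $\mathcal{C}$ and $\bar{\mathcal{S}}$ its set of relabeling classes. (i) If $\mathcal{C}$ is of Case I and $\mathcal{G}_\mathcal{S}=\langle \tau_1^{t+1}\tau_2^{t+1},\ \tau_2^{2(t+1)},\ \tau_2^{2x_2+1}s,\ \tau_1^{2x_1+2}\tau_2^{2x_2+1}r^2\rangle$, then each equivalence class (orbit) in $\bar{\mathcal{S}}$ under the action of $\mathcal{G}_\mathcal{S}$ has size dividing $4n$. (ii) If $\mathcal{C}$ is of Case II, $G_0=[a~~b]$, and $\mathcal{G}_\mathcal{S}=\langle \tau_1^{a}\tau_2^{b},\ \tau_1^{2x_1+2}\tau_2^{2x_2+1}r^2\rangle$, then each equivalence class in $\bar{\mathcal{S}}$ under the action of $\mathcal{G}_\mathcal{S}$ has size dividing $2n$.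
   Context: $\mathbb{Z}_n$ is the integers modulo $n$; Lee weight $\mathrm{wt}_L(\mathbf{u})=\sum_i\min\{u_i,n-u_i\}$, Lee distance $d_L(\mathbf{u},\mathbf{v})=\mathrm{wt}_L(\mathbf{u}-\mathbf{v})$. Linear code = submodule of $\mathbb{Z}_n^2$, generator matrix = matrix whose rows form a minimal spanning set; codes are equivalent if one is the image of the other under a coordinate permutation matrix. $\mathcal{A}_{2t+1}$: set of points within Lee distance $t$ of an adjacent pair (its core); it has $n$ points. A $t$-error-correcting diameter perfect code is a $(2t+1)$-diameter perfect code of size $n$ in $\mathbb{Z}_n^2$ with minimum distance $2t+2$ and anticode $\mathcal{A}_{2t+1}$. Case I: $\mathcal{C}_0$ equivalent to the code generated by $\begin{bmatrix}t+1&t+1\\0&2(t+1)\end{bmatrix}$; Case II: $\mathcal{C}_0$ equivalent to the code generated by $[1~~2t+1]$. For each codeword $\mathbf{c}_i$ of $\mathcal{C}=\{\mathbf{c}_1,\dots,\mathbf{c}_n\}$ take the translate $\mathcal{A}_i$ of $\mathcal{A}_{2t+1}$ with core $\{\mathbf{c}_i,\mathbf{c}_i+(1,0)\}$; the palette grid $\mathcal{I}_{\mathcal{C},\mathcal{A}}$ has entry $i$ at every position $(x,y)\in\mathcal{A}_i$ (row $x$, column $y$). A diameter perfect Sudoku grid is a Latin square of order $n$ on $[n]$ whose pairs of corresponding entries with $\mathcal{I}_{\mathcal{C},\mathcal{A}}$ are all distinct (orthogonality). Relabeling: $S_1\sim S_2$ iff $S_2$ is obtained from $S_1$ by applying a bijection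 $\sigma:[n]\to[n]$ to every entry. Maps on arrays (indices mod $n$): $(r(A))_{i,j}=A_{n-1-j,i}$, $(s(A))_{i,j}=A_{i,n-1-j}$, $(\tau_1(A))_{i,j}=A_{i-1,j}$, $(\tau_2(A))_{i,j}=A_{i,j-1}$. Elements of $\mathcal{G}_\mathcal{S}$ map $\mathcal{S}$ to $\mathcal{S}$ and commute with relabeling, hence act on $\bar{\mathcal{S}}$. *)

theory Defs
  imports Main
begin

text \<open>Elements of Z_n are represented by integers in {0..<n}; vectors of Z_n^2 by
  pairs of such integers. Grid positions (x,y) (row x, column y) are the same pairs.\<close>

definition Zn2 :: "int \<Rightarrow> (int \<times> int) set" where
  "Zn2 n = {0..<n} \<times> {0..<n}"

definition vadd :: "int \<Rightarrow> int \<times> int \<Rightarrow> int \<times> int \<Rightarrow> int \<times> int" where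
  "vadd n u v = ((fst u + fst v) mod n, (snd u + snd v) mod n)"

definition vsub :: "int \<Rightarrow> int \<times> int \<Rightarrow> int \<times> int \<Rightarrow> int \<times> int" where
  "vsub n u v = ((fst u - fst v) mod n, (snd u - snd v) mod n)"

definition lee_wt1 :: "int \<Rightarrow> int \<Rightarrow> int" where
  "lee_wt1 n u = min (u mod n) (n - u mod n)"

definition lee_wt :: "int \<Rightarrow> int \<times> int \<Rightarrow> int" where
  "lee_wt n u = lee_wt1 n (fst u) + lee_wt1 n (snd u)"

definition lee_dist :: "int \<Rightarrow> int \<times> int \<Rightarrow> int \<times> int \<Rightarrow> int" where
  "lee_dist n u v = lee_wt n (vsub n u v)"

definition linear_code :: "int \<Rightarrow> (int \<times> int) set \<Rightarrow> bool" where
  "linear_code n C \<longleftrightarrow> C \<subseteq> Zn2 n \<and> (0,0) \<in> C \<and>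
     (\<forall>u\<in>C. \<forall>v\<in>C. vadd n u v \<in> C) \<and>
     (\<forall>k::int. \<forall>u\<in>C. ((k * fst u) mod n, (k * snd u) mod n) \<in> C)"

definition row_span :: "int \<Rightarrow> (int \<times> int) list \<Rightarrow> (int \<times> int) set" where
  "row_span n M = {((\<Sum>i<length M. k i * fst (M ! i)) mod n,
                    (\<Sum>i<length M. k i * snd (M ! i)) mod n) | k :: nat \<Rightarrow> int. True}"

definition generator_matrix :: "int \<Rightarrow> (int \<times> int) set \<Rightarrow> (int \<times> int) list \<Rightarrow> bool" where
  "generator_matrix n C M \<longleftrightarrow> set M \<subseteq> Zn2 n \<and> row_span n M = C \<and>
     (\<forall>i<length M. row_span n (take i M @ drop (Suc i) M) \<noteq> C)"

text \<open>Equivalence: image under a coordinate permutation matrix (identity or swap).\<close>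
definition equiv_codes :: "(int \<times> int) set \<Rightarrow> (int \<times> int) set \<Rightarrow> bool" where
  "equiv_codes C D \<longleftrightarrow> D = C \<or> D = (\<lambda>(u,v). (v,u)) ` C"

definition anticode :: "int \<Rightarrow> int \<Rightarrow> int \<times> int \<Rightarrow> (int \<times> int) set" where
  "anticode n t c = {p \<in> Zn2 n. lee_dist n p c \<le> t \<or> lee_dist n p (vadd n c (1,0)) \<le> t}"

text \<open>t-error-correcting diameter perfect code: a (2t+1)-diameter perfect code of size n
  in Z_n^2 with minimum distance 2t+2 and anticode A_{2t+1} (|C| |A_{2t+1}| = n^2).\<close>
definition t_ec_dp_code :: "int \<Rightarrow> int \<Rightarrow> (int \<times> int) set \<Rightarrow> bool" where
  "t_ec_dp_code n t C \<longleftrightarrow> C \<subseteq> Zn2 n \<and> card C = nat n \<and>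
     card C * card (anticode n t (0,0)) = nat n ^ 2 \<and>
     (\<forall>u\<in>C. \<forall>v\<in>C. u \<noteq> v \<longrightarrow> lee_dist n u v \<ge> 2*t+2) \<and>
     (\<exists>u\<in>C. \<exists>v\<in>C. u \<noteq> v \<and> lee_dist n u v = 2*t+2)"

definition caseI :: "int \<Rightarrow> int \<Rightarrow> (int \<times> int) set \<Rightarrow> bool" where
  "caseI n t C0 \<longleftrightarrow> equiv_codes (row_span n [(t+1, t+1), (0, 2*(t+1))]) C0"

definition caseII :: "int \<Rightarrow> int \<Rightarrow> (int \<times> int) set \<Rightarrow> bool" where
  "caseII n t C0 \<longleftrightarrow> equiv_codes (row_span n [(1, 2*t+1)]) C0"

definition translate_code :: "int \<Rightarrow> int \<times> int \<Rightarrow> (int \<times> int) set \<Rightarrow> (int \<times> int) set" where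
  "translate_code n x C0 = vadd n x ` C0"

text \<open>An n x n array is a function on positions; it is normalised to 0 outside Z_n^2.\<close>
type_synonym grid = "int \<times> int \<Rightarrow> int"

definition grid_ext :: "int \<Rightarrow> grid \<Rightarrow> bool" where
  "grid_ext n A \<longleftrightarrow> (\<forall>p. p \<notin> Zn2 n \<longrightarrow> A p = 0)"

definition latin_square :: "int \<Rightarrow> grid \<Rightarrow> bool" where
  "latin_square n S \<longleftrightarrow> grid_ext n S \<and>
     (\<forall>i\<in>{0..<n}. bij_betw (\<lambda>j. S (i,j)) {0..<n} {1..n}) \<and>
     (\<forall>j\<in>{0..<n}. bij_betw (\<lambda>i. S (i,j)) {0..<n} {1..n})"

text \<open>Palette grid for the enumeration cw : [n] -> C of the codewords.\<close>
definition palette :: "int \<Rightarrow> int \<Rightarrow> (int \<Rightarrow> int \<times> int) \<Rightarrow> grid" where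
  "palette n t cw p = (THE i. i \<in> {1..n} \<and> p \<in> anticode n t (cw i))"

definition dp_sudoku :: "int \<Rightarrow> int \<Rightarrow> (int \<Rightarrow> int \<times> int) \<Rightarrow> grid \<Rightarrow> bool" where
  "dp_sudoku n t cw S \<longleftrightarrow> latin_square n S \<and>
     inj_on (\<lambda>p. (S p, palette n t cw p)) (Zn2 n)"

definition sudoku_set :: "int \<Rightarrow> int \<Rightarrow> (int \<Rightarrow> int \<times> int) \<Rightarrow> grid set" where
  "sudoku_set n t cw = {S. dp_sudoku n t cw S}"

definition relabel :: "int \<Rightarrow> (int \<Rightarrow> int) \<Rightarrow> grid \<Rightarrow> grid" where
  "relabel n \<sigma> A = (\<lambda>p. if p \<in> Zn2 n then \<sigma> (A p) else 0)"

definition relabel_class :: "int \<Rightarrow> grid \<Rightarrow> grid set" where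
  "relabel_class n S = {relabel n \<sigma> S | \<sigma>. bij_betw \<sigma> {1..n} {1..n}}"

definition rr :: "int \<Rightarrow> grid \<Rightarrow> grid" where
  "rr n A = (\<lambda>(i,j). if (i,j) \<in> Zn2 n then A ((n - 1 - j) mod n, i mod n) else 0)"

definition ss :: "int \<Rightarrow> grid \<Rightarrow> grid" where
  "ss n A = (\<lambda>(i,j). if (i,j) \<in> Zn2 n then A (i mod n, (n - 1 - j) mod n) else 0)"

definition tau1 :: "int \<Rightarrow> grid \<Rightarrow> grid" where
  "tau1 n A = (\<lambda>(i,j). if (i,j) \<in> Zn2 n then A ((i - 1) mod n, j mod n) else 0)"

definition tau2 :: "int \<Rightarrow> grid \<Rightarrow> grid" where
  "tau2 n A = (\<lambda>(i,j). if (i,j) \<in> Zn2 n then A (i mod n, (j - 1) mod n) else 0)"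

text \<open>Group generated by a set of maps (each generator has finite order on normalised
  arrays, so the generated monoid is the generated group).\<close>
inductive_set generated :: "(grid \<Rightarrow> grid) set \<Rightarrow> (grid \<Rightarrow> grid) set"
  for gens where
  gen_id: "id \<in> generated gens"
| gen_comp: "g \<in> gens \<Longrightarrow> h \<in> generated gens \<Longrightarrow> g \<circ> h \<in> generated gens"

definition GS_caseI :: "int \<Rightarrow> int \<Rightarrow> int \<times> int \<Rightarrow> (grid \<Rightarrow> grid) set" where
  "GS_caseI n t x = generated
     { (tau1 n ^^ nat (t+1)) \<circ> (tau2 n ^^ nat (t+1)),
       tau2 n ^^ nat (2*(t+1)),
       (tau2 n ^^ nat (2 * snd x + 1)) \<circ> ss n,
       (tau1 n ^^ nat (2 * fst x + 2)) \<circ> (tau2 n ^^ nat (2 * snd x + 1)) \<circ> (rr n ^^ 2) }"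

definition GS_caseII :: "int \<Rightarrow> int \<times> int \<Rightarrow> int \<times> int \<Rightarrow> (grid \<Rightarrow> grid) set" where
  "GS_caseII n ab x = generated
     { (tau1 n ^^ nat (fst ab)) \<circ> (tau2 n ^^ nat (snd ab)),
       (tau1 n ^^ nat (2 * fst x + 2)) \<circ> (tau2 n ^^ nat (2 * snd x + 1)) \<circ> (rr n ^^ 2) }"

definition class_orbit :: "int \<Rightarrow> (grid \<Rightarrow> grid) set \<Rightarrow> grid \<Rightarrow> grid set set" where
  "class_orbit n G S = {relabel_class n (g S) | g. g \<in> G}"

end

theory Submission
  imports Defs "HOL-Algebra.Group_Action" "HOL-Algebra.Multiplicative_Group"
begin


type_synonym aff = "int \<times> int \<times> int \<times> int"

definition amul :: "int \<Rightarrow> aff \<Rightarrow> aff \<Rightarrow> aff" where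
  "amul n p q = (case p of (s1,s2,a,b) \<Rightarrow> case q of (s1',s2',a',b') \<Rightarrow>
     (s1*s1', s2*s2', (s1'*a + a') mod n, (s2'*b + b') mod n))"

definition AG :: "int \<Rightarrow> aff monoid" where
  "AG n = \<lparr>carrier = {-1,1} \<times> {-1,1} \<times> {0..<n} \<times> {0..<n}, mult = amul n, one = (1,1,0,0)\<rparr>"

lemma AG_simps[simp]: "carrier (AG n) = {-1,1} \<times> {-1,1} \<times> {0..<n} \<times> {0..<n}"
  "mult (AG n) = amul n" "one (AG n) = (1,1,0,0)"
  by (simp_all add: AG_def)

lemma amul_simp[simp]: "amul n (s1,s2,a,b) (s1',s2',a',b') = (s1*s1', s2*s2', (s1'*a + a') mod n, (s2'*b + b') mod n)"
  by (simp add: amul_def)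

lemma group_AG: assumes "n > 0" shows "group (AG n)"
proof (rule groupI)
  fix x y assume "x \<in> carrier (AG n)" "y \<in> carrier (AG n)"
  then show "x \<otimes>\<^bsub>AG n\<^esub> y \<in> carrier (AG n)" using assms by auto
next
  show "\<one>\<^bsub>AG n\<^esub> \<in> carrier (AG n)" using assms by auto
next
  fix x y z assume "x \<in> carrier (AG n)" "y \<in> carrier (AG n)" "z \<in> carrier (AG n)"
  then show "x \<otimes>\<^bsub>AG n\<^esub> y \<otimes>\<^bsub>AG n\<^esub> z = x \<otimes>\<^bsub>AG n\<^esub> (y \<otimes>\<^bsub>AG n\<^esub> z)"
    by (auto simp: mod_simps algebra_simps)
next
  fix x assume "x \<in> carrier (AG n)"
  then show "\<one>\<^bsub>AG n\<^esub> \<otimes>\<^bsub>AG n\<^esub> x = x" by auto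
next
  fix x assume x: "x \<in> carrier (AG n)"
  then obtain s1 s2 a b where xe: "x = (s1,s2,a,b)" and s: "s1 \<in> {-1,1}" "s2 \<in> {-1,1}"
     and ab: "a \<in> {0..<n}" "b \<in> {0..<n}" by auto
  show "\<exists>y\<in>carrier (AG n). y \<otimes>\<^bsub>AG n\<^esub> x = \<one>\<^bsub>AG n\<^esub>"
  proof (rule bexI[of _ "(s1, s2, (- s1 * a) mod n, (- s2 * b) mod n)"])
    show "(s1, s2, (- s1 * a) mod n, (- s2 * b) mod n) \<otimes>\<^bsub>AG n\<^esub> x = \<one>\<^bsub>AG n\<^esub>"
      using s xe by (auto simp: mod_simps)
  qed (use s assms in auto)
qed



definition psi :: "int \<Rightarrow> aff \<Rightarrow> grid \<Rightarrow> grid" where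
  "psi n p A = (case p of (s1,s2,a,b) \<Rightarrow>
     (\<lambda>(i,j). if (i,j) \<in> Zn2 n then A ((s1*i + a) mod n, (s2*j + b) mod n) else 0))"

lemma psi_mult: assumes "n > 0" shows "psi n (amul n p q) = psi n p \<circ> psi n q"
proof (rule ext, rule ext)
  fix A and x :: "int \<times> int"
  obtain s1 s2 a b where p: "p = (s1,s2,a,b)" by (cases p) auto
  obtain s1' s2' a' b' where q: "q = (s1',s2',a',b')" by (cases q) auto
  obtain i j where x: "x = (i,j)" by (cases x) auto
  show "psi n (amul n p q) A x = (psi n p \<circ> psi n q) A x"
  proof -
    have e: "(u * ((v * k + c) mod n) + d) mod n = (v * u * k + (u * c + d)) mod n" for u v k c d :: int
    proof -
      have "(u * ((v * k + c) mod n) + d) mod n = (u * (v * k + c) + d) mod n"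
        by (metis mod_add_left_eq mod_mult_right_eq)
      also have "u * (v * k + c) + d = v * u * k + (u * c + d)" by (simp add: algebra_simps)
      finally show ?thesis .
    qed
    show ?thesis
      using assms by (simp add: p q x psi_def Zn2_def e mod_add_right_eq)
  qed
qed

lemma psi_relabel: "psi n p (relabel n \<sigma> A) = relabel n \<sigma> (psi n p A)"
proof (rule ext)
  fix x :: "int \<times> int"
  obtain s1 s2 a b where p: "p = (s1,s2,a,b)" by (cases p) auto
  obtain i j where x: "x = (i,j)" by (cases x) auto
  show "psi n p (relabel n \<sigma> A) x = relabel n \<sigma> (psi n p A) x"
  proof (cases "n > 0")
    case True
    then show ?thesis by (simp add: p x psi_def relabel_def Zn2_def)
  next
    case False
    then show ?thesis by (simp add: p x psi_def relabel_def Zn2_def)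
  qed
qed

lemma cls_psi: "relabel_class n (psi n p A) = psi n p ` relabel_class n A"
  unfolding relabel_class_def by (auto simp: psi_relabel image_iff) (metis psi_relabel)

lemma relabel_psi_one: "relabel n \<sigma> (psi n (1,1,0,0) A) = relabel n \<sigma> A"
  by (rule ext) (auto simp: relabel_def psi_def Zn2_def)

lemma cls_psi_one: "psi n (1,1,0,0) ` relabel_class n A = relabel_class n A"
  unfolding cls_psi[symmetric] unfolding relabel_class_def by (simp add: relabel_psi_one)

lemma tau1_psi: "tau1 n = psi n (1,1,n-1,0)"
proof (rule ext, rule ext)
  fix A and x :: "int \<times> int"
  obtain i j where x: "x = (i,j)" by (cases x) auto
  have "(i + (n - 1)) mod n = (i - 1) mod n"
    by (metis add.commute add_diff_eq diff_add_eq mod_add_self2)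
  then show "tau1 n A x = psi n (1,1,n-1,0) A x"
    by (simp add: x tau1_def psi_def)
qed

lemma tau2_psi: "tau2 n = psi n (1,1,0,n-1)"
proof (rule ext, rule ext)
  fix A and x :: "int \<times> int"
  obtain i j where x: "x = (i,j)" by (cases x) auto
  have "(j + (n - 1)) mod n = (j - 1) mod n"
    by (metis add.commute add_diff_eq diff_add_eq mod_add_self2)
  then show "tau2 n A x = psi n (1,1,0,n-1) A x"
    by (simp add: x tau2_def psi_def)
qed

lemma ss_psi: "ss n = psi n (1,-1,0,n-1)"
proof (rule ext, rule ext)
  fix A and x :: "int \<times> int"
  obtain i j where x: "x = (i,j)" by (cases x) auto
  then show "ss n A x = psi n (1,-1,0,n-1) A x"
    by (simp add: x ss_def psi_def)
qed

lemma rr2_psi: "rr n ^^ 2 = psi n (-1,-1,n-1,n-1)"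
proof (rule ext, rule ext)
  fix A and x :: "int \<times> int"
  obtain i j where x: "x = (i,j)" by (cases x) auto
  show "(rr n ^^ 2) A x = psi n (-1,-1,n-1,n-1) A x"
  proof (cases "x \<in> Zn2 n")
    case True
    then have ij: "0 \<le> i" "i < n" "0 \<le> j" "j < n" by (auto simp: x Zn2_def)
    have m1: "(n - 1 - j) mod n = n - 1 - j" "i mod n = i" using ij by auto
    have m2: "(n - 1 - i) mod n = n - 1 - i" using ij by auto
    have in2: "((n - 1 - j) mod n, i mod n) \<in> Zn2 n" using ij m1 by (auto simp: Zn2_def)
    show ?thesis using True in2 ij
      by (simp add: x rr_def psi_def numeral_2_eq_2 m1 m2 algebra_simps)
  next
    case False
    then show ?thesis by (simp add: x rr_def psi_def numeral_2_eq_2)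
  qed
qed

definition cls :: "int \<Rightarrow> grid \<Rightarrow> grid set" where "cls n = relabel_class n"

lemma pow_rel:
  assumes "n > 0" "h \<in> carrier (AG n)" "\<And>A. cls n (g A) = psi n h ` cls n A"
  shows "cls n ((g ^^ k) A) = psi n (h [^]\<^bsub>AG n\<^esub> k) ` cls n A"
proof (induction k arbitrary: A)
  case 0
  then show ?case by (simp add: cls_def cls_psi_one)
next
  case (Suc k)
  have "cls n ((g ^^ Suc k) A) = cls n ((g ^^ k) (g A))" by (metis comp_apply funpow_Suc_right)
  also have "\<dots> = psi n (h [^]\<^bsub>AG n\<^esub> k) ` psi n h ` cls n A" using Suc assms(3) by simp
  also have "\<dots> = psi n (amul n (h [^]\<^bsub>AG n\<^esub> k) h) ` cls n A"
    using psi_mult[OF assms(1)] by (simp add: image_comp)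
  finally show ?case by simp
qed

lemma generated_comp: "g \<in> generated Gens \<Longrightarrow> h \<in> generated Gens \<Longrightarrow> g \<circ> h \<in> generated Gens"
  by (induction g rule: generated.induct) (auto simp: comp_assoc intro: generated.intros)

lemma generated_gen: "g \<in> Gens \<Longrightarrow> g \<in> generated Gens"
  using generated.gen_comp[OF _ generated.gen_id] by simp

lemma generated_pow: "g \<in> Gens \<Longrightarrow> g ^^ k \<in> generated Gens"
  by (induction k) (auto intro: generated.intros simp: generated_gen)

lemma gen_to_grp:
  assumes n: "n > 0" and P: "P \<subseteq> carrier (AG n)"
    and rel: "\<forall>g\<in>Gens. \<exists>p\<in>P. \<forall>A. cls n (g A) = psi n p ` cls n A"
    and g: "g \<in> generated Gens"
  shows "\<exists>p\<in>generate (AG n) P. \<forall>A. cls n (g A) = psi n p ` cls n A"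
  using g
proof (induction g rule: generated.induct)
  case gen_id
  show ?case by (rule bexI[of _ "(1,1,0,0)"]) (auto simp: cls_def cls_psi_one
      intro: generate.one[of "AG n", simplified])
next
  case (gen_comp g h)
  from rel gen_comp(1) obtain pg where pg: "pg \<in> P" "\<forall>A. cls n (g A) = psi n pg ` cls n A" by blast
  from gen_comp(3) obtain ph where ph: "ph \<in> generate (AG n) P" "\<forall>A. cls n (h A) = psi n ph ` cls n A" by blast
  show ?case
  proof (rule bexI[of _ "amul n pg ph"])
    show "amul n pg ph \<in> generate (AG n) P"
      using generate.eng[OF generate.incl[OF pg(1)] ph(1)] by simp
    show "\<forall>A. cls n ((g \<circ> h) A) = psi n (amul n pg ph) ` cls n A"
      using pg ph psi_mult[OF n] by (simp add: image_comp)
  qed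
qed

lemma grp_to_gen:
  assumes n: "n > 0" and P: "P \<subseteq> carrier (AG n)"
    and rel: "\<forall>p\<in>P. \<exists>g\<in>Gens. \<forall>A. cls n (g A) = psi n p ` cls n A"
    and p: "p \<in> generate (AG n) P"
  shows "\<exists>g\<in>generated Gens. \<forall>A. cls n (g A) = psi n p ` cls n A"
  using p
proof (induction p rule: generate.induct)
  case one
  show ?case by (rule bexI[of _ id]) (auto simp: cls_def cls_psi_one intro: generated.gen_id)
next
  case (incl h)
  then show ?case using rel generated_gen by blast
next
  case (inv h)
  interpret G: group "AG n" using group_AG[OF n] .
  from rel inv obtain g where g: "g \<in> Gens" "\<forall>A. cls n (g A) = psi n h ` cls n A" by blast
  have hc: "h \<in> carrier (AG n)" using inv P by auto
  have fin: "finite (carrier (AG n))" by simp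
  have ord: "order (AG n) > 0" unfolding order_def using fin hc by (auto simp: card_gt_0_iff)
  define k where "k = order (AG n) - 1"
  have "h [^]\<^bsub>AG n\<^esub> k \<otimes>\<^bsub>AG n\<^esub> h = \<one>\<^bsub>AG n\<^esub>"
    using G.pow_order_eq_1[OF hc] ord unfolding k_def
    by (metis G.nat_pow_Suc Suc_diff_1)
  then have hk: "inv\<^bsub>AG n\<^esub> h = h [^]\<^bsub>AG n\<^esub> k"
    using G.inv_equality hc by blast
  show ?case
    by (rule bexI[of _ "g ^^ k"]) (use pow_rel[OF n hc] g generated_pow hk in auto)
next
  case (eng h1 h2)
  from eng obtain g1 g2 where g1: "g1 \<in> generated Gens" "\<forall>A. cls n (g1 A) = psi n h1 ` cls n A"
    and g2: "g2 \<in> generated Gens" "\<forall>A. cls n (g2 A) = psi n h2 ` cls n A" by blast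
  show ?case
    by (rule bexI[of _ "g1 \<circ> g2"]) (use g1 g2 psi_mult[OF n] generated_comp in \<open>auto simp: image_comp\<close>)
qed



lemma psi_cls_in: "psi n p ` cls n A \<in> range (cls n)"
  by (metis cls_def cls_psi rangeI)

lemma psi_one_cls: "c \<in> range (cls n) \<Longrightarrow> psi n (1,1,0,0) ` c = c"
  by (metis cls_def cls_psi_one imageE)

lemma orbit_dvd:
  assumes n: "n > 0" and H: "subgroup H (AG n)"
  shows "card ((\<lambda>p. psi n p ` cls n S) ` H) dvd card H"
proof -
  interpret G: group "AG n" using group_AG[OF n] .
  define X where "X = range (cls n)"
  define \<phi> where "\<phi> = (\<lambda>p. restrict (\<lambda>c. psi n p ` c) X)"
  have Hc: "H \<subseteq> carrier (AG n)" using H subgroup.subset by blast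
  have grpH: "group (AG n\<lparr>carrier := H\<rparr>)" using G.subgroup_imp_group[OF H] .
  have comp: "psi n p ` psi n q ` c = psi n (amul n p q) ` c" for p q c
    using psi_mult[OF n] by (simp add: image_comp)
  have inBij: "\<phi> p \<in> Bij X" if p: "p \<in> carrier (AG n)" for p
  proof -
    define q where "q = inv\<^bsub>AG n\<^esub> p"
    have q: "q \<in> carrier (AG n)" "amul n q p = (1,1,0,0)" "amul n p q = (1,1,0,0)"
      using p G.l_inv G.r_inv G.inv_closed unfolding q_def by (simp_all del: AG_simps add: AG_simps(2,3))
    have "bij_betw (\<lambda>c. psi n p ` c) X X"
    proof (rule bij_betw_byWitness[where f'="\<lambda>c. psi n q ` c"])
      show "\<forall>c\<in>X. psi n q ` psi n p ` c = c" unfolding comp q(2) X_def using psi_one_cls by blast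
      show "\<forall>c\<in>X. psi n p ` psi n q ` c = c" unfolding comp q(3) X_def using psi_one_cls by blast
      show "(`) (psi n p) ` X \<subseteq> X" unfolding X_def using psi_cls_in by blast
      show "(`) (psi n q) ` X \<subseteq> X" unfolding X_def using psi_cls_in by blast
    qed
    then show ?thesis unfolding Bij_def \<phi>_def
      by (intro IntI CollectI restrict_extensional) (simp only: bij_betw_restrict_eq)
  qed
  have hom: "\<phi> \<in> hom (AG n\<lparr>carrier := H\<rparr>) (BijGroup X)"
  proof (rule homI)
    fix p assume "p \<in> carrier (AG n\<lparr>carrier := H\<rparr>)"
    then show "\<phi> p \<in> carrier (BijGroup X)" using inBij Hc by (auto simp: BijGroup_def)
  next
    fix p q assume pq: "p \<in> carrier (AG n\<lparr>carrier := H\<rparr>)" "q \<in> carrier (AG n\<lparr>carrier := H\<rparr>)"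
    then have pq': "p \<in> carrier (AG n)" "q \<in> carrier (AG n)" using Hc by auto
    have "\<phi> p \<otimes>\<^bsub>BijGroup X\<^esub> \<phi> q = compose X (\<phi> p) (\<phi> q)"
      using inBij[OF pq'(1)] inBij[OF pq'(2)] by (simp add: BijGroup_def)
    also have "\<dots> = \<phi> (amul n p q)"
    proof (rule ext)
      fix c show "compose X (\<phi> p) (\<phi> q) c = \<phi> (amul n p q) c"
      proof (cases "c \<in> X")
        case True
        then have "psi n q ` c \<in> X" unfolding X_def using psi_cls_in by blast
        then show ?thesis using True by (simp add: compose_def \<phi>_def comp)
      next
        case False
        then show ?thesis by (simp add: compose_def \<phi>_def)
      qed
    qed
    finally show "\<phi> (p \<otimes>\<^bsub>AG n\<lparr>carrier := H\<rparr>\<^esub> q) = \<phi> p \<otimes>\<^bsub>BijGroup X\<^esub> \<phi> q"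
      by simp
  qed
  have ga: "group_action (AG n\<lparr>carrier := H\<rparr>) X \<phi>"
    unfolding group_action_def group_hom_def group_hom_axioms_def
    by (intro conjI grpH group_BijGroup hom)
  have Sx: "cls n S \<in> X" by (simp add: X_def)
  have "card (orbit (AG n\<lparr>carrier := H\<rparr>) \<phi> (cls n S)) * card (stabilizer (AG n\<lparr>carrier := H\<rparr>) \<phi> (cls n S))
      = order (AG n\<lparr>carrier := H\<rparr>)"
    using group_action.orbit_stabilizer_theorem[OF ga Sx] .
  moreover have "orbit (AG n\<lparr>carrier := H\<rparr>) \<phi> (cls n S) = (\<lambda>p. psi n p ` cls n S) ` H"
    unfolding orbit_def using Sx by (auto simp: \<phi>_def)
  ultimately have e: "card ((\<lambda>p. psi n p ` cls n S) ` H) * card (stabilizer (AG n\<lparr>carrier := H\<rparr>) \<phi> (cls n S)) = card H"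
    by (simp add: order_def)
  show ?thesis by (subst e[symmetric]) (rule dvd_triv_left)
qed



definition rel :: "int \<Rightarrow> (grid \<Rightarrow> grid) \<Rightarrow> aff \<Rightarrow> bool" where
  "rel n g p \<longleftrightarrow> (\<forall>A. cls n (g A) = psi n p ` cls n A)"

lemma rel_psi: "rel n (psi n p) p"
  by (simp add: rel_def cls_def cls_psi)

lemma rel_comp: "n > 0 \<Longrightarrow> rel n g p \<Longrightarrow> rel n h q \<Longrightarrow> rel n (g \<circ> h) (amul n p q)"
  using psi_mult[of n p q] by (simp add: rel_def image_comp)

lemma rel_pow: "n > 0 \<Longrightarrow> p \<in> carrier (AG n) \<Longrightarrow> rel n g p \<Longrightarrow> rel n (g ^^ k) (p [^]\<^bsub>AG n\<^esub> k)"
  using pow_rel[of n p g k] by (simp add: rel_def)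

lemma tr_pow: assumes "n > 0"
  shows "(1::int,1::int,u,v) [^]\<^bsub>AG n\<^esub> (k::nat) = (1,1,(int k * u) mod n, (int k * v) mod n)"
proof (induction k)
  case 0
  then show ?case by simp
next
  case (Suc k)
  then show ?case by (simp add: mod_add_left_eq mod_add_right_eq algebra_simps)
qed

lemma class_orbit_eq:
  assumes n: "n > 0" and P: "P \<subseteq> carrier (AG n)"
    and rel1: "\<forall>g\<in>Gens. \<exists>p\<in>P. rel n g p"
    and rel2: "\<forall>p\<in>P. \<exists>g\<in>Gens. rel n g p"
  shows "class_orbit n (generated Gens) S = (\<lambda>p. psi n p ` cls n S) ` generate (AG n) P"
proof
  show "class_orbit n (generated Gens) S \<subseteq> (\<lambda>p. psi n p ` cls n S) ` generate (AG n) P"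
  proof
    fix c assume "c \<in> class_orbit n (generated Gens) S"
    then obtain g where g: "g \<in> generated Gens" "c = cls n (g S)"
      by (auto simp: class_orbit_def cls_def)
    obtain p where "p \<in> generate (AG n) P" "\<forall>A. cls n (g A) = psi n p ` cls n A"
      using gen_to_grp[OF n P _ g(1)] rel1 unfolding rel_def by blast
    then show "c \<in> (\<lambda>p. psi n p ` cls n S) ` generate (AG n) P" using g by auto
  qed
next
  show "(\<lambda>p. psi n p ` cls n S) ` generate (AG n) P \<subseteq> class_orbit n (generated Gens) S"
  proof
    fix c assume "c \<in> (\<lambda>p. psi n p ` cls n S) ` generate (AG n) P"
    then obtain p where p: "p \<in> generate (AG n) P" "c = psi n p ` cls n S" by auto
    obtain g where "g \<in> generated Gens" "\<forall>A. cls n (g A) = psi n p ` cls n A"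
      using grp_to_gen[OF n P _ p(1)] rel2 unfolding rel_def by blast
    then show "c \<in> class_orbit n (generated Gens) S" using p
      unfolding class_orbit_def cls_def by auto
  qed
qed

lemma orbit_card_dvd:
  assumes n: "n > 0" and P: "P \<subseteq> carrier (AG n)"
    and rel1: "\<forall>g\<in>Gens. \<exists>p\<in>P. rel n g p"
    and rel2: "\<forall>p\<in>P. \<exists>g\<in>Gens. rel n g p"
  shows "card (class_orbit n (generated Gens) S) dvd card (generate (AG n) P)"
proof -
  interpret G: group "AG n" using group_AG[OF n] .
  show ?thesis
    unfolding class_orbit_eq[OF assms]
    using orbit_dvd[OF n G.generate_is_subgroup[OF P]] .
qed

lemma finite_closed_subgroup:
  assumes G: "group G" and fin: "finite (carrier G)" and K: "K \<subseteq> carrier G" "\<one>\<^bsub>G\<^esub> \<in> K"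
    and cl: "\<And>x y. x \<in> K \<Longrightarrow> y \<in> K \<Longrightarrow> x \<otimes>\<^bsub>G\<^esub> y \<in> K"
  shows "subgroup K G"
proof -
  interpret group G by (rule G)
  have pw: "x [^]\<^bsub>G\<^esub> (k::nat) \<in> K" if "x \<in> K" for x k
    using that by (induction k) (auto simp: K cl)
  show ?thesis
  proof (rule subgroupI)
    show "K \<subseteq> carrier G" by (rule K)
    show "K \<noteq> {}" using K by auto
    fix x assume x: "x \<in> K"
    then have xc: "x \<in> carrier G" using K by auto
    have ord: "order G > 0" unfolding order_def using fin xc by (auto simp: card_gt_0_iff)
    have "x [^]\<^bsub>G\<^esub> (order G - 1) \<otimes>\<^bsub>G\<^esub> x = \<one>\<^bsub>G\<^esub>"
      using pow_order_eq_1[OF xc] ord by (metis nat_pow_Suc Suc_diff_1)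
    then have "inv\<^bsub>G\<^esub> x = x [^]\<^bsub>G\<^esub> (order G - 1)" using inv_equality xc by blast
    then show "inv\<^bsub>G\<^esub> x \<in> K" using pw x by simp
  next
    fix x y assume "x \<in> K" "y \<in> K" then show "x \<otimes>\<^bsub>G\<^esub> y \<in> K" by (rule cl)
  qed
qed

lemma card_cong_interval:
  fixes d N r :: int
  assumes "0 < d" "d dvd N" "0 \<le> N"
  shows "card {z \<in> {0..<N}. d dvd (z - r)} = nat (N div d)"
proof -
  have eq: "{z \<in> {0..<N}. d dvd (z - r)} = (\<lambda>k. r mod d + d * k) ` {0..<N div d}"
  proof
    show "{z \<in> {0..<N}. d dvd (z - r)} \<subseteq> (\<lambda>k. r mod d + d * k) ` {0..<N div d}"
    proof
      fix z assume z: "z \<in> {z \<in> {0..<N}. d dvd (z - r)}"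
      then have zm: "z mod d = r mod d" by (simp add: mod_eq_dvd_iff)
      have "z = r mod d + d * (z div d)" using zm by (metis add.commute div_mult_mod_eq mult.commute)
      moreover have "z div d \<in> {0..<N div d}"
      proof -
        have z0: "0 \<le> z" "z < N" using z by auto
        have "d * (z div d) \<le> z" using assms
          by (metis add.commute div_mult_mod_eq le_add_same_cancel2 mult.commute pos_mod_sign)
        moreover have NN: "d * (N div d) = N" using assms by simp
        ultimately have "d * (z div d) < d * (N div d)" using z0 by linarith
        then have "z div d < N div d" using assms mult_less_cancel_left_pos by blast
        moreover have "0 \<le> z div d" using z0 assms pos_imp_zdiv_nonneg_iff by blast
        ultimately show ?thesis by simp
      qed
      ultimately show "z \<in> (\<lambda>k. r mod d + d * k) ` {0..<N div d}" by blast
    qed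
  next
    show "(\<lambda>k. r mod d + d * k) ` {0..<N div d} \<subseteq> {z \<in> {0..<N}. d dvd (z - r)}"
    proof
      fix z assume "z \<in> (\<lambda>k. r mod d + d * k) ` {0..<N div d}"
      then obtain k where k: "0 \<le> k" "k < N div d" "z = r mod d + d * k" by auto
      have "k + 1 \<le> N div d" using k by simp
      then have "d * (k + 1) \<le> d * (N div d)" using assms mult_le_cancel_left_pos by blast
      also have "\<dots> = N" using assms by simp
      finally have "d * k + d \<le> N" by (simp add: algebra_simps)
      moreover have "r mod d < d" "0 \<le> r mod d" using assms by auto
      moreover have "d dvd (z - r)" using k
        by (metis add_diff_cancel_left' dvd_add_right_iff dvd_triv_left minus_mod_eq_mult_div mod_eq_dvd_iff mod_mod_trivial)
      moreover have "0 \<le> d * k" using k assms by simp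
      ultimately show "z \<in> {z \<in> {0..<N}. d dvd (z - r)}" using k by auto
    qed
  qed
  have inj: "inj_on (\<lambda>k. r mod d + d * k) {0..<N div d}" using assms by (auto simp: inj_on_def)
  show ?thesis unfolding eq card_image[OF inj] by simp
qed



definition c1 :: "int \<Rightarrow> int \<Rightarrow> int" where "c1 x1 s = (if s = 1 then 0 else 2*x1+1)"
definition c2 :: "int \<Rightarrow> int \<Rightarrow> int" where "c2 x2 s = (if s = 1 then 0 else 2*x2)"

definition KI :: "int \<Rightarrow> int \<Rightarrow> int \<Rightarrow> int \<Rightarrow> aff set" where
  "KI n m x1 x2 = {(s1,s2,a,b). s1 \<in> {-1,1} \<and> s2 \<in> {-1,1} \<and> a \<in> {0..<n} \<and> b \<in> {0..<n} \<and>
      m dvd (a - c1 x1 s1) \<and> (2*m) dvd ((b - c2 x2 s2) - (a - c1 x1 s1))}"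

lemma dvd_mod_minus: "(d::int) dvd n \<Longrightarrow> d dvd (x mod n - y) \<longleftrightarrow> d dvd (x - y)"
proof -
  assume "d dvd n"
  moreover have "x mod n - y = (x - y) - n * (x div n)"
    by (simp add: minus_div_mult_eq_mod[symmetric] algebra_simps)
  ultimately show ?thesis by (metis dvd_add_left_iff dvd_minus_iff dvd_mult2 uminus_add_conv_diff add.commute)
qed

lemma dvd_mod_minus2: "(d::int) dvd n \<Longrightarrow> d dvd ((x mod n - u) - (y mod n - v)) \<longleftrightarrow> d dvd ((x - u) - (y - v))"
proof -
  assume dn: "d dvd n"
  have "(x mod n - u) - (y mod n - v) = ((x - u) - (y - v)) + n * (y div n - x div n)"
    by (simp add: minus_div_mult_eq_mod[symmetric] algebra_simps)
  moreover have "d dvd n * (y div n - x div n)" using dn by simp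
  ultimately show ?thesis by (metis dvd_add_left_iff)
qed

lemma c1_mult: "s \<in> {-1,1} \<Longrightarrow> s' \<in> {-1,1} \<Longrightarrow> c1 x1 (s * s') = s' * c1 x1 s + c1 x1 s'"
  by (auto simp: c1_def)
lemma c2_mult: "s \<in> {-1,1} \<Longrightarrow> s' \<in> {-1,1} \<Longrightarrow> c2 x2 (s * s') = s' * c2 x2 s + c2 x2 s'"
  by (auto simp: c2_def)

lemma KI_closed:
  assumes m: "m > 0" and n: "n > 0" and mn: "(2*m) dvd n"
    and p: "p \<in> KI n m x1 x2" and q: "q \<in> KI n m x1 x2"
  shows "amul n p q \<in> KI n m x1 x2"
proof -
  obtain s1 s2 a b where pe: "p = (s1,s2,a,b)" by (cases p) auto
  obtain s1' s2' a' b' where qe: "q = (s1',s2',a',b')" by (cases q) auto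
  have s: "s1 \<in> {-1,1}" "s2 \<in> {-1,1}" "s1' \<in> {-1,1}" "s2' \<in> {-1,1}"
    using p q unfolding pe qe KI_def by blast+
  have ss: "s1 * s1' \<in> {-1,1}" "s2 * s2' \<in> {-1,1}" using s by auto
  define A where "A = a - c1 x1 s1"
  define B where "B = b - c2 x2 s2"
  define A' where "A' = a' - c1 x1 s1'"
  define B' where "B' = b' - c2 x2 s2'"
  have d: "m dvd A" "(2*m) dvd (B - A)" "m dvd A'" "(2*m) dvd (B' - A')"
    using p q pe qe by (auto simp: KI_def A_def B_def A'_def B'_def)
  have mn': "m dvd n" using mn by (metis dvd_mult_right)
  have e1: "s1' * a + a' - c1 x1 (s1 * s1') = s1' * A + A'"
    using c1_mult[OF s(1) s(3)] by (simp add: A_def A'_def algebra_simps)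
  have e2: "s2' * b + b' - c2 x2 (s2 * s2') = s2' * B + B'"
    using c2_mult[OF s(2) s(4)] by (simp add: B_def B'_def algebra_simps)
  have ev: "2 dvd (s2' - s1')" using s by auto
  have g1: "m dvd (s1' * A + A')" using d by simp
  have g2: "(2*m) dvd ((s2' * B + B') - (s1' * A + A'))"
  proof -
    have eq: "(s2' * B + B') - (s1' * A + A') = s2' * (B - A) + (s2' - s1') * A + (B' - A')"
      by (simp add: algebra_simps)
    have h: "(2*m) dvd ((s2' - s1') * A)" using mult_dvd_mono[OF ev d(1)] .
    have h2: "(2*m) dvd (s2' * (B - A))" using d(2) by (rule dvd_mult)
    show ?thesis unfolding eq using dvd_add[OF dvd_add[OF h2 h] d(4)] .
  qed
  have r1: "m dvd ((s1' * a + a') mod n - c1 x1 (s1 * s1'))"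
    using g1 e1 dvd_mod_minus[OF mn'] by simp
  have r2: "(2*m) dvd (((s2' * b + b') mod n - c2 x2 (s2 * s2')) - ((s1' * a + a') mod n - c1 x1 (s1 * s1')))"
    using dvd_mod_minus2[OF mn] g2 e1 e2 by simp
  have ab: "(s1' * a + a') mod n \<in> {0..<n}" "(s2' * b + b') mod n \<in> {0..<n}" using n by auto
  show ?thesis using ss ab r1 r2 unfolding pe qe KI_def amul_simp by blast
qed



lemma card_KI:
  assumes m: "m > 0" and n: "n = 2 * m^2"
  shows "card (KI n m x1 x2) = 4 * nat n"
proof -
  define As where "As s1 = {a \<in> {0..<n}. m dvd (a - c1 x1 s1)}" for s1
  define Bs where "Bs s1 s2 a = {b \<in> {0..<n}. (2*m) dvd (b - (c2 x2 s2 + a - c1 x1 s1))}" for s1 s2 a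
  have eq: "KI n m x1 x2 = Sigma {-1,1} (\<lambda>s1. Sigma {-1,1} (\<lambda>s2. Sigma (As s1) (\<lambda>a. Bs s1 s2 a)))"
    by (auto simp: KI_def As_def Bs_def algebra_simps)
  have dA: "m dvd n" "(2*m) dvd n" using n by (auto simp: power2_eq_square)
  have cA: "card (As s1) = nat (2*m)" for s1
  proof -
    have "card (As s1) = nat (n div m)" unfolding As_def
      using card_cong_interval[OF m dA(1)] n by simp
    also have "n div m = 2 * m" using n m by (simp add: power2_eq_square)
    finally show ?thesis .
  qed
  have cB: "card (Bs s1 s2 a) = nat m" for s1 s2 a
  proof -
    have "card (Bs s1 s2 a) = nat (n div (2*m))" unfolding Bs_def
      using card_cong_interval[OF _ dA(2)] n m by simp
    also have "n div (2*m) = m" using n m by (simp add: power2_eq_square)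
    finally show ?thesis .
  qed
  have finA: "finite (As s1)" for s1 unfolding As_def by (rule finite_subset[of _ "{0..<n}"]) auto
  have finB: "finite (Bs s1 s2 a)" for s1 s2 a unfolding Bs_def by (rule finite_subset[of _ "{0..<n}"]) auto
  have c3: "card (Sigma (As s1) (\<lambda>a. Bs s1 s2 a)) = nat (2*m) * nat m" for s1 s2
    by (simp add: card_SigmaI finA finB cB cA)
  have c2': "card (Sigma {-1,1} (\<lambda>s2. Sigma (As s1) (\<lambda>a. Bs s1 s2 a))) = 2 * (nat (2*m) * nat m)" for s1
    by (subst card_SigmaI) (auto simp: finA finB c3)
  have "card (KI n m x1 x2) = 2 * (2 * (nat (2*m) * nat m))"
    unfolding eq by (subst card_SigmaI) (auto simp: finA finB c2')
  also have "\<dots> = 4 * nat n" using n m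
    by (simp add: power2_eq_square nat_mult_distrib)
  finally show ?thesis .
qed



lemma card_subgroup_dvd:
  assumes G: "group G" and H: "subgroup H G" and K: "subgroup K G" and HK: "H \<subseteq> K"
  shows "card H dvd card K"
proof -
  interpret group G by (rule G)
  have H': "subgroup H (G\<lparr>carrier := K\<rparr>)" using subgroup_incl[OF H K HK] .
  have GK: "group (G\<lparr>carrier := K\<rparr>)" using subgroup_imp_group[OF K] .
  have "card (rcosets\<^bsub>G\<lparr>carrier := K\<rparr>\<^esub> H) * card H = order (G\<lparr>carrier := K\<rparr>)"
    using group.lagrange[OF GK H'] .
  then have "card (rcosets\<^bsub>G\<lparr>carrier := K\<rparr>\<^esub> H) * card H = card K" by (simp add: order_def)
  then show ?thesis by (metis dvd_triv_right)
qed

lemma KI_memI: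
  assumes n: "n > 0" and mn: "m dvd n" "(2*m) dvd n" and s: "s1 \<in> {-1,1}" "s2 \<in> {-1,1}"
    and ha: "n dvd (a - a')" and hb: "n dvd (b - b')"
    and c1: "m dvd (a' - c1 x1 s1)" and c2: "(2*m) dvd ((b' - c2 x2 s2) - (a' - c1 x1 s1))"
  shows "(s1, s2, a mod n, b mod n) \<in> KI n m x1 x2"
proof -
  have "m dvd (a - c1 x1 s1)"
  proof -
    have "a - c1 x1 s1 = (a - a') + (a' - c1 x1 s1)" by simp
    moreover have "m dvd (a - a')" using ha mn(1) dvd_trans by blast
    ultimately show ?thesis using dvd_add[OF _ c1] by metis
  qed
  then have r1: "m dvd (a mod n - c1 x1 s1)" using dvd_mod_minus[OF mn(1)] by simp
  have "(2*m) dvd ((b - c2 x2 s2) - (a - c1 x1 s1))"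
  proof -
    have "(b - c2 x2 s2) - (a - c1 x1 s1) = ((b - b') - (a - a')) + ((b' - c2 x2 s2) - (a' - c1 x1 s1))" by simp
    moreover have "(2*m) dvd ((b - b') - (a - a'))" using ha hb mn(2) dvd_trans dvd_diff by blast
    ultimately show ?thesis using dvd_add[OF _ c2] by metis
  qed
  then have r2: "(2*m) dvd ((b mod n - c2 x2 s2) - (a mod n - c1 x1 s1))" using dvd_mod_minus2[OF mn(2)] by simp
  show ?thesis using r1 r2 s n unfolding KI_def by auto
qed

lemma mod_witness: "(z::int) mod n = z - n * (z div n)"
  by (simp add: minus_div_mult_eq_mod[symmetric] algebra_simps)

lemma caseI_result:
  assumes ht: "t \<ge> 1" and hn: "n = 2 * (t+1)^2" and hx: "x \<in> Zn2 n"
  shows "card (class_orbit n (GS_caseI n t x) S) dvd 4 * nat n"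
proof -
  obtain x1 x2 where xe: "x = (x1, x2)" by (cases x) auto
  have x12: "0 \<le> x1" "x1 < n" "0 \<le> x2" "x2 < n" using hx by (auto simp: xe Zn2_def)
  define m where "m = t + 1"
  have m: "m > 0" "m \<ge> 2" using ht by (auto simp: m_def)
  have nm: "n = 2 * m^2" using hn by (simp add: m_def)
  have n: "n > 0" using nm m by simp
  have mn: "m dvd n" "(2*m) dvd n" using nm by (auto simp: power2_eq_square)
  interpret G: group "AG n" using group_AG[OF n] .
  define t1 where "t1 = (1::int, 1::int, n - 1, 0::int)"
  define t2 where "t2 = (1::int, 1::int, 0::int, n - 1)"
  define sg where "sg = (1::int, -1::int, 0::int, n - 1)"
  define rho where "rho = (-1::int, -1::int, n - 1, n - 1)"
  have cr: "t1 \<in> carrier (AG n)" "t2 \<in> carrier (AG n)" "sg \<in> carrier (AG n)" "rho \<in> carrier (AG n)"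
    using n by (auto simp: t1_def t2_def sg_def rho_def)
  have rb: "rel n (tau1 n) t1" "rel n (tau2 n) t2" "rel n (ss n) sg" "rel n (rr n ^^ 2) rho"
    by (simp_all add: t1_def t2_def sg_def rho_def tau1_psi tau2_psi ss_psi rr2_psi rel_psi)
  define k1 where "k1 = nat (t+1)"
  define k2 where "k2 = nat (2*(t+1))"
  define k3 where "k3 = nat (2 * snd x + 1)"
  define k4 where "k4 = nat (2 * fst x + 2)"
  have kv: "int k1 = m" "int k2 = 2*m" "int k3 = 2*x2+1" "int k4 = 2*x1+2"
    using x12 m by (auto simp: k1_def k2_def k3_def k4_def m_def xe)
  define p1 where "p1 = amul n (t1 [^]\<^bsub>AG n\<^esub> k1) (t2 [^]\<^bsub>AG n\<^esub> k1)"
  define p2 where "p2 = t2 [^]\<^bsub>AG n\<^esub> k2"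
  define p3 where "p3 = amul n (t2 [^]\<^bsub>AG n\<^esub> k3) sg"
  define p4 where "p4 = amul n (amul n (t1 [^]\<^bsub>AG n\<^esub> k4) (t2 [^]\<^bsub>AG n\<^esub> k3)) rho"
  define g1 where "g1 = (tau1 n ^^ k1) \<circ> (tau2 n ^^ k1)"
  define g2 where "g2 = tau2 n ^^ k2"
  define g3 where "g3 = (tau2 n ^^ k3) \<circ> ss n"
  define g4 where "g4 = (tau1 n ^^ k4) \<circ> (tau2 n ^^ k3) \<circ> (rr n ^^ 2)"
  have rels: "rel n g1 p1" "rel n g2 p2" "rel n g3 p3" "rel n g4 p4"
    unfolding g1_def g2_def g3_def g4_def p1_def p2_def p3_def p4_def
    by (intro rel_comp rel_pow n cr rb)+
  have Gens: "GS_caseI n t x = generated {g1, g2, g3, g4}"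
    unfolding GS_caseI_def g1_def g2_def g3_def g4_def k1_def k2_def k3_def k4_def ..
  define P where "P = {p1, p2, p3, p4}"
  have Pc: "P \<subseteq> carrier (AG n)"
    unfolding P_def p1_def p2_def p3_def p4_def using cr
    by (simp del: AG_simps add: AG_simps(2)[symmetric] G.m_closed G.nat_pow_closed)
  have dv: "card (class_orbit n (GS_caseI n t x) S) dvd card (generate (AG n) P)"
    unfolding Gens
    by (rule orbit_card_dvd[OF n Pc]) (use rels in \<open>auto simp: P_def\<close>)
  have pw1: "t1 [^]\<^bsub>AG n\<^esub> k = (1, 1, (int k * (n - 1)) mod n, 0)" for k
    unfolding t1_def using tr_pow[OF n] by simp
  have pw2: "t2 [^]\<^bsub>AG n\<^esub> k = (1, 1, 0, (int k * (n - 1)) mod n)" for k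
    unfolding t2_def using tr_pow[OF n] by simp
  have PK: "P \<subseteq> KI n m x1 x2"
  proof -
    have "p1 \<in> KI n m x1 x2"
    proof -
      have e: "p1 = (1, 1, (int k1 * (n - 1)) mod n mod n, (int k1 * (n - 1)) mod n mod n)"
        by (simp add: p1_def pw1 pw2)
      show ?thesis unfolding e
        by (rule KI_memI[OF n mn, where a'="int k1 * (n - 1)" and b'="int k1 * (n - 1)"])
           (auto simp: c1_def c2_def kv mod_witness)
    qed
    moreover have "p2 \<in> KI n m x1 x2"
    proof -
      have e: "p2 = (1, 1, 0 mod n, (int k2 * (n - 1)) mod n mod n)"
        by (simp add: p2_def pw2)
      show ?thesis unfolding e
      proof (rule KI_memI[OF n mn, where a'=0 and b'="int k2 * (n - 1)"])
        show "(2*m) dvd ((int k2 * (n - 1) - c2 x2 1) - (0 - c1 x1 1))"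
          by (simp add: c1_def c2_def kv)
        show "n dvd ((int k2 * (n - 1)) mod n - int k2 * (n - 1))"
          by (simp add: mod_witness)
      qed (auto simp: c1_def)
    qed
    moreover have "p3 \<in> KI n m x1 x2"
    proof -
      define Z where "Z = int k3 * (n - 1)"
      have e: "p3 = (1, -1, 0 mod n, (- (Z mod n) + (n - 1)) mod n)"
        by (simp add: p3_def pw2 sg_def Z_def)
      show ?thesis unfolding e
      proof (rule KI_memI[OF n mn, where a'=0 and b'="2*x2"])
        show "n dvd (- (Z mod n) + (n - 1) - 2 * x2)"
        proof
          show "- (Z mod n) + (n - 1) - 2 * x2 = n * (Z div n + 1 - (2*x2+1))"
            by (simp add: mod_witness Z_def kv algebra_simps)
        qed
      qed (auto simp: c1_def c2_def)
    qed
    moreover have "p4 \<in> KI n m x1 x2"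
    proof -
      define Z1 where "Z1 = int k4 * (n - 1)"
      define Z2 where "Z2 = int k3 * (n - 1)"
      have e: "p4 = (-1, -1, (- (Z1 mod n) + (n - 1)) mod n, (- (Z2 mod n) + (n - 1)) mod n)"
        by (simp add: p4_def pw1 pw2 rho_def Z1_def Z2_def)
      show ?thesis unfolding e
      proof (rule KI_memI[OF n mn, where a'="2*x1+1" and b'="2*x2"])
        show "n dvd (- (Z1 mod n) + (n - 1) - (2 * x1 + 1))"
        proof
          show "- (Z1 mod n) + (n - 1) - (2 * x1 + 1) = n * (Z1 div n + 1 - (2*x1+2))"
            by (simp add: mod_witness Z1_def kv algebra_simps)
        qed
        show "n dvd (- (Z2 mod n) + (n - 1) - 2 * x2)"
        proof
          show "- (Z2 mod n) + (n - 1) - 2 * x2 = n * (Z2 div n + 1 - (2*x2+1))"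
            by (simp add: mod_witness Z2_def kv algebra_simps)
        qed
      qed (auto simp: c1_def c2_def)
    qed
    ultimately show ?thesis by (simp add: P_def)
  qed
  have KIc: "KI n m x1 x2 \<subseteq> carrier (AG n)" by (auto simp: KI_def)
  have KIone: "\<one>\<^bsub>AG n\<^esub> \<in> KI n m x1 x2" using n by (simp add: KI_def c1_def c2_def)
  have KIsub: "subgroup (KI n m x1 x2) (AG n)"
    by (rule finite_closed_subgroup[OF G.is_group _ KIc KIone])
       (auto intro: KI_closed[OF m(1) n mn(2)])
  have Hsub: "subgroup (generate (AG n) P) (AG n)" using G.generate_is_subgroup[OF Pc] .
  have "generate (AG n) P \<subseteq> KI n m x1 x2" using G.generate_subgroup_incl[OF PK KIsub] .
  then have "card (generate (AG n) P) dvd card (KI n m x1 x2)"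
    using card_subgroup_dvd[OF G.is_group Hsub KIsub] by simp
  also have "card (KI n m x1 x2) = 4 * nat n" using card_KI[OF m(1) nm] .
  finally show ?thesis using dv dvd_trans by blast
qed



lemma caseII_result:
  assumes ht: "t \<ge> 1" and hn: "n = 2 * (t+1)^2" and hx: "x \<in> Zn2 n"
  shows "card (class_orbit n (GS_caseII n (a, b) x) S) dvd 2 * nat n"
proof -
  obtain x1 x2 where xe: "x = (x1, x2)" by (cases x) auto
  have x12: "0 \<le> x1" "x1 < n" "0 \<le> x2" "x2 < n" using hx by (auto simp: xe Zn2_def)
  have n: "n > 0" using hn ht by simp
  interpret G: group "AG n" using group_AG[OF n] .
  define t1 where "t1 = (1::int, 1::int, n - 1, 0::int)"
  define t2 where "t2 = (1::int, 1::int, 0::int, n - 1)"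
  define rho where "rho = (-1::int, -1::int, n - 1, n - 1)"
  have cr: "t1 \<in> carrier (AG n)" "t2 \<in> carrier (AG n)" "rho \<in> carrier (AG n)"
    using n by (auto simp: t1_def t2_def rho_def)
  have rb: "rel n (tau1 n) t1" "rel n (tau2 n) t2" "rel n (rr n ^^ 2) rho"
    by (simp_all add: t1_def t2_def rho_def tau1_psi tau2_psi rr2_psi rel_psi)
  define ka where "ka = nat a"
  define kb where "kb = nat b"
  define k3 where "k3 = nat (2 * snd x + 1)"
  define k4 where "k4 = nat (2 * fst x + 2)"
  define p1 where "p1 = amul n (t1 [^]\<^bsub>AG n\<^esub> ka) (t2 [^]\<^bsub>AG n\<^esub> kb)"
  define p4 where "p4 = amul n (amul n (t1 [^]\<^bsub>AG n\<^esub> k4) (t2 [^]\<^bsub>AG n\<^esub> k3)) rho"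
  define g1 where "g1 = (tau1 n ^^ ka) \<circ> (tau2 n ^^ kb)"
  define g4 where "g4 = (tau1 n ^^ k4) \<circ> (tau2 n ^^ k3) \<circ> (rr n ^^ 2)"
  have rels: "rel n g1 p1" "rel n g4 p4"
    unfolding g1_def g4_def p1_def p4_def
    by (intro rel_comp rel_pow n cr rb)+
  have Gens: "GS_caseII n (a, b) x = generated {g1, g4}"
    unfolding GS_caseII_def g1_def g4_def ka_def kb_def k3_def k4_def by simp
  define P where "P = {p1, p4}"
  have p1c: "p1 \<in> carrier (AG n)" and p4c: "p4 \<in> carrier (AG n)"
    unfolding p1_def p4_def using cr
    by (simp_all del: AG_simps add: AG_simps(2)[symmetric] G.m_closed G.nat_pow_closed)
  have Pc: "P \<subseteq> carrier (AG n)" using p1c p4c by (simp add: P_def)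
  have dv: "card (class_orbit n (GS_caseII n (a, b) x) S) dvd card (generate (AG n) P)"
    unfolding Gens
    by (rule orbit_card_dvd[OF n Pc]) (use rels in \<open>auto simp: P_def\<close>)
  have pw1: "t1 [^]\<^bsub>AG n\<^esub> k = (1, 1, (int k * (n - 1)) mod n, 0)" for k
    unfolding t1_def using tr_pow[OF n] by simp
  have pw2: "t2 [^]\<^bsub>AG n\<^esub> k = (1, 1, 0, (int k * (n - 1)) mod n)" for k
    unfolding t2_def using tr_pow[OF n] by simp
  obtain u0 v0 where p1e: "p1 = (1, 1, u0, v0)" "u0 \<in> {0..<n}" "v0 \<in> {0..<n}"
    using p1c by (simp add: p1_def pw1 pw2)
  obtain c d where p4e: "p4 = (-1, -1, c, d)"
    using n by (simp add: p4_def pw1 pw2 rho_def)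
  have cd: "c \<in> {0..<n}" "d \<in> {0..<n}" using p4c p4e by auto
  have cdm: "c mod n = c" "d mod n = d" using cd by auto
  define Tr where "Tr = {p \<in> carrier (AG n). fst p = 1 \<and> fst (snd p) = 1}"
  have Trsub: "subgroup Tr (AG n)"
    by (rule finite_closed_subgroup[OF G.is_group]) (use n in \<open>auto simp: Tr_def\<close>)
  define T where "T = generate (AG n) {p1}"
  have Tsub: "subgroup T (AG n)" unfolding T_def using G.generate_is_subgroup p1c by simp
  have TTr: "T \<subseteq> Tr" unfolding T_def
    by (rule G.generate_subgroup_incl[OF _ Trsub]) (use p1c p1e in \<open>auto simp: Tr_def\<close>)
  define H where "H = generate (AG n) P"
  have Hsub: "subgroup H (AG n)" unfolding H_def using G.generate_is_subgroup[OF Pc] .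
  have Tc: "T \<subseteq> carrier (AG n)" using Tsub subgroup.subset by blast
  have assoc: "amul n (amul n x y) z = amul n x (amul n y z)"
    if "x \<in> carrier (AG n)" "y \<in> carrier (AG n)" "z \<in> carrier (AG n)" for x y z
    using G.m_assoc[OF that] by simp
  have mc: "amul n x y \<in> carrier (AG n)"
    if "x \<in> carrier (AG n)" "y \<in> carrier (AG n)" for x y
    using G.m_closed[OF that] by (simp only: AG_simps(2))
  have inT: "h \<in> carrier (AG n)" if "h \<in> T" for h using that Tc by blast
  have p4sq: "amul n p4 p4 = (1,1,0,0)" by (simp add: p4e)
  have inv_tr: "inv\<^bsub>AG n\<^esub> h = (1, 1, (- fst (snd (snd h))) mod n, (- snd (snd (snd h))) mod n)"
    if hT: "h \<in> Tr" for h
  proof -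
    obtain u v where h: "h = (1,1,u,v)" "u \<in> {0..<n}" "v \<in> {0..<n}" using hT unfolding Tr_def
      by (cases h) auto
    show ?thesis
      by (rule G.inv_equality) (use h n in \<open>auto simp: mod_simps\<close>)
  qed
  have swap: "amul n p4 h = amul n (inv\<^bsub>AG n\<^esub> h) p4" if hT: "h \<in> Tr" for h
  proof -
    obtain u v where h: "h = (1,1,u,v)" using hT unfolding Tr_def by (cases h) auto
    show ?thesis using inv_tr[OF hT] by (simp add: h p4e mod_simps cdm)
  qed
  define Y where "Y = (\<lambda>h. amul n h p4) ` T"
  have p4T: "amul n (1,1,0,0) p4 = p4" by (simp add: p4e cdm)
  have HY: "H \<subseteq> T \<union> Y" unfolding H_def
  proof
    fix h assume "h \<in> generate (AG n) P"
    then show "h \<in> T \<union> Y"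
    proof (induction h rule: generate.induct)
      case one
      then show ?case using subgroup.one_closed[OF Tsub] by simp
    next
      case (incl h)
      then show ?case unfolding P_def Y_def T_def
        using generate.incl[of p1 "{p1}" "AG n"] generate.one[of "AG n" "{p1}"] p4T
        by (auto simp: image_iff) (metis)
    next
      case (inv h)
      then have "h = p1 \<or> h \<in> {p4}" by (auto simp: P_def)
      then show ?case
      proof
        assume "h = p1"
        then show ?thesis unfolding T_def using generate.inv[of p1 "{p1}" "AG n"] by simp
      next
        assume "h \<in> {p4}"
        then have "inv\<^bsub>AG n\<^esub> h = p4" using G.inv_equality[OF _ p4c p4c] p4sq by simp
        moreover have "p4 \<in> Y" unfolding Y_def using subgroup.one_closed[OF Tsub] p4T
          by (metis AG_simps(3) image_eqI)
        ultimately show ?thesis by simp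
      qed
    next
      case (eng h1 h2)
      show ?case
      proof (cases "h1 \<in> T")
        case h1T: True
        show ?thesis
        proof (cases "h2 \<in> T")
          case True
          then show ?thesis using h1T subgroup.m_closed[OF Tsub] by simp
        next
          case False
          then obtain t' where t': "t' \<in> T" "h2 = amul n t' p4" using eng.IH(2) by (auto simp: Y_def)
          have "amul n h1 h2 = amul n (amul n h1 t') p4"
            using assoc[OF inT[OF h1T] inT[OF t'(1)] p4c] t'(2) by simp
          moreover have "amul n h1 t' \<in> T" using subgroup.m_closed[OF Tsub h1T t'(1)] by simp
          ultimately show ?thesis by (simp add: Y_def)
        qed
      next
        case False
        then obtain t where t: "t \<in> T" "h1 = amul n t p4" using eng.IH(1) by (auto simp: Y_def)
        show ?thesis
        proof (cases "h2 \<in> T")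
          case h2T: True
          have ih: "inv\<^bsub>AG n\<^esub> h2 \<in> T" using subgroup.m_inv_closed[OF Tsub h2T] .
          have "amul n h1 h2 = amul n t (amul n p4 h2)"
            using assoc[OF inT[OF t(1)] p4c inT[OF h2T]] t(2) by simp
          also have "\<dots> = amul n t (amul n (inv\<^bsub>AG n\<^esub> h2) p4)" using swap[of h2] h2T TTr by (metis subsetD)
          also have "\<dots> = amul n (amul n t (inv\<^bsub>AG n\<^esub> h2)) p4"
            using assoc[OF inT[OF t(1)] inT[OF ih] p4c] by simp
          finally have "amul n h1 h2 = amul n (amul n t (inv\<^bsub>AG n\<^esub> h2)) p4" .
          moreover have "amul n t (inv\<^bsub>AG n\<^esub> h2) \<in> T" using subgroup.m_closed[OF Tsub t(1) ih] by simp
          ultimately show ?thesis by (simp add: Y_def)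
        next
          case False
          then obtain t' where t': "t' \<in> T" "h2 = amul n t' p4" using eng.IH(2) by (auto simp: Y_def)
          have ih: "inv\<^bsub>AG n\<^esub> t' \<in> T" using subgroup.m_inv_closed[OF Tsub t'(1)] .
          have c': "inv\<^bsub>AG n\<^esub> t' \<in> carrier (AG n)" using ih Tc by auto
          have pt: "amul n p4 t' \<in> carrier (AG n)" using G.m_closed[OF p4c inT[OF t'(1)]] by simp
          have "amul n h1 h2 = amul n (amul n t p4) (amul n t' p4)" using t t' by simp
          also have "\<dots> = amul n t (amul n p4 (amul n t' p4))"
            using assoc[OF inT[OF t(1)] p4c mc[OF inT[OF t'(1)] p4c]] by simp
          also have "\<dots> = amul n t (amul n (amul n p4 t') p4)"
            using assoc[OF p4c inT[OF t'(1)] p4c] by simp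
          also have "\<dots> = amul n t (amul n (amul n (inv\<^bsub>AG n\<^esub> t') p4) p4)" using swap[of t'] t'(1) TTr by (metis subsetD)
          also have "\<dots> = amul n t (amul n (inv\<^bsub>AG n\<^esub> t') (amul n p4 p4))"
            using assoc[OF c' p4c p4c] by simp
          also have "\<dots> = amul n t (inv\<^bsub>AG n\<^esub> t')"
            using p4sq G.r_one[OF c'] by simp
          finally show ?thesis using subgroup.m_closed[OF Tsub t(1) ih] by simp
        qed
      qed
    qed
  qed
  have TH: "T \<subseteq> H" unfolding T_def H_def P_def by (rule G.mono_generate) auto
  have p4H: "p4 \<in> H" unfolding H_def P_def by (rule generate.incl) simp
  have YH: "Y \<subseteq> H"
  proof
    fix y assume "y \<in> Y"
    then obtain h where h: "h \<in> T" "y = amul n h p4" by (auto simp: Y_def)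
    show "y \<in> H" using subgroup.m_closed[OF Hsub subsetD[OF TH h(1)] p4H] h(2) by simp
  qed
  have Heq: "H = T \<union> Y" using HY TH YH by auto
  have disj: "T \<inter> Y = {}"
  proof -
    have "fst y = -1" if yY: "y \<in> Y" for y
    proof -
      obtain h where "h \<in> T" "y = amul n h p4" using yY by (auto simp: Y_def)
      then show ?thesis using TTr by (auto simp: Tr_def p4e)
    qed
    moreover have "fst y = 1" if "y \<in> T" for y using that TTr by (auto simp: Tr_def)
    ultimately show ?thesis by force
  qed
  have finT: "finite T" by (rule finite_subset[OF Tc]) simp
  have injY: "inj_on (\<lambda>h. amul n h p4) T"
  proof (rule inj_onI)
    fix h h' assume hh: "h \<in> T" "h' \<in> T" "amul n h p4 = amul n h' p4"
    then show "h = h'" using G.right_cancel[OF p4c inT[OF hh(1)] inT[OF hh(2)]] by simp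
  qed
  have cY: "card Y = card T" unfolding Y_def using card_image[OF injY] .
  have cH: "card H = 2 * card T"
    using Heq disj finT cY card_Un_disjoint[of T Y] by (simp add: Y_def)
  have "p1 [^]\<^bsub>AG n\<^esub> (nat n) = \<one>\<^bsub>AG n\<^esub>"
    using tr_pow[OF n, of u0 v0 "nat n"] n by (simp add: p1e)
  then have "group.ord (AG n) p1 dvd nat n" using G.pow_eq_id[OF p1c] by simp
  moreover have "group.ord (AG n) p1 = card T" unfolding T_def using G.generate_pow_card[OF p1c] .
  ultimately have "card T dvd nat n" by simp
  then have "card H dvd 2 * nat n" using cH by simp
  then show ?thesis using dv unfolding H_def using dvd_trans by blast
qed


theorem mainTheorem5:
  fixes t n :: int and C0 C :: "(int \<times> int) set" and G0 :: "(int \<times> int) list"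
    and x :: "int \<times> int" and cw :: "int \<Rightarrow> int \<times> int"
  assumes ht: "t \<ge> 1"
    and hn: "n = 2 * (t+1)^2"
    and hlin: "linear_code n C0"
    and hdp: "t_ec_dp_code n t C0"
    and hG0: "generator_matrix n C0 G0"
    and hx: "x \<in> Zn2 n"
    and hC: "C = translate_code n x C0"
    and hcw: "bij_betw cw {1..n} C"
    and hcase: "caseI n t C0 \<or> caseII n t C0"
  shows "(caseI n t C0 \<longrightarrow>
            (\<forall>S \<in> sudoku_set n t cw. card (class_orbit n (GS_caseI n t x) S) dvd 4 * nat n))
       \<and> (\<forall>a b. caseII n t C0 \<longrightarrow> G0 = [(a, b)] \<longrightarrow>
            (\<forall>S \<in> sudoku_set n t cw. card (class_orbit n (GS_caseII n (a, b) x) S) dvd 2 * nat n))"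
  using caseI_result[OF ht hn hx] caseII_result[OF ht hn hx] by blast

end
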